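(* Let $(X,d_X)$, $(Y,d_Y)$ and $(X\times Y,d)$ be ultrametric spaces, where $d$ is partial distance-preserving and $d_\infty\le d$ on $(X\times Y)\times(X\times Y)$. Then for all compact sets $W\subseteq X$, $Z\subseteq Y$ and every $\varepsilon>0$, $$\mathcal M_\varepsilon(W\times Z)=\mathcal M_\varepsilon(W)\cdot\mathcal M_\varepsilon(Z),\qquad \mathcal N_\varepsilon(W\times Z)=\mathcal N_\varepsilon(W)\cdot\mathcal N_\varepsilon(Z),\qquad \mathcal M_\varepsilon(W\times Z)=\mathcal N_\varepsilon(W\times Z),$$ where the quantities for $W$, $Z$, $W\times Z$ are computed in $(X,d_X)$, $(Y,d_Y)$, $(X\times Y,d)$ respectively.
   Context: $d_\infty((x_1,y_1),(x_2,y_2))=\max\{d_X(x_1,x_2),d_Y(y_1,y_2)\}$. A metric $d$ on $X\times Y$ is partial distance-preserving if $d((x_1,y),(x_2,y))=d_X(x_1,x_2)$ and $d((x,y_1),(x,y_2))=d_Y(y_1,y_2)$ for all $x,x_1,x_2\in X$, $y,y_1,y_2\in Y$. Ultrametric: $\rho(a,b)\le\max\{\rho(a,c),\rho(c,b)\}$. In a metric space $(M,\rho)$ with closed balls $B(c,r)=\{x:\rho(x,c)\le r\}$: $C$ is an $\varepsilon$-net for $V$ if $V\subseteq\bigcup_{c\in C}B(c,\varepsilon)$; $A$ is $\varepsilon$-distinguishable if $\rho(a,b)>\varepsilon$ for distinct $a,b\in A$. For totally bounded $V$, the covering number $\mathcal N_\varepsilon(V)$ is the smallest cardinality of a subset of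 $V$ that is an $\varepsilon$-net for $V$, and the packing number $\mathcal M_\varepsilon(V)$ is the maximal cardinality of an $\varepsilon$-distinguishable subset of $V$. *)

theory Defs
  imports "HOL-Analysis.Analysis"
begin

definition ultrametric :: "'a set \<Rightarrow> ('a \<Rightarrow> 'a \<Rightarrow> real) \<Rightarrow> bool" where
  "ultrametric M \<rho> \<longleftrightarrow> Metric_space M \<rho> \<and>
     (\<forall>a\<in>M. \<forall>b\<in>M. \<forall>c\<in>M. \<rho> a b \<le> max (\<rho> a c) (\<rho> c b))"

definition eps_net :: "'a set \<Rightarrow> ('a \<Rightarrow> 'a \<Rightarrow> real) \<Rightarrow> real \<Rightarrow> 'a set \<Rightarrow> 'a set \<Rightarrow> bool" where
  "eps_net M \<rho> \<epsilon> C V \<longleftrightarrow> V \<subseteq> (\<Union>c\<in>C. Metric_space.mcball M \<rho> c \<epsilon>)"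

definition eps_distinguishable :: "('a \<Rightarrow> 'a \<Rightarrow> real) \<Rightarrow> real \<Rightarrow> 'a set \<Rightarrow> bool" where
  "eps_distinguishable \<rho> \<epsilon> A \<longleftrightarrow> (\<forall>a\<in>A. \<forall>b\<in>A. a \<noteq> b \<longrightarrow> \<rho> a b > \<epsilon>)"

definition covering_number :: "'a set \<Rightarrow> ('a \<Rightarrow> 'a \<Rightarrow> real) \<Rightarrow> real \<Rightarrow> 'a set \<Rightarrow> nat" where
  "covering_number M \<rho> \<epsilon> V =
     (LEAST n. \<exists>C. C \<subseteq> V \<and> finite C \<and> card C = n \<and> eps_net M \<rho> \<epsilon> C V)"

definition packing_number :: "('a \<Rightarrow> 'a \<Rightarrow> real) \<Rightarrow> real \<Rightarrow> 'a set \<Rightarrow> nat" where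
  "packing_number \<rho> \<epsilon> V =
     (GREATEST n. \<exists>A. A \<subseteq> V \<and> finite A \<and> card A = n \<and> eps_distinguishable \<rho> \<epsilon> A)"

end

theory Submission
  imports Defs
begin

lemma ex_fin_net:
  assumes "Metric_space M \<rho>" "compactin (Metric_space.mtopology M \<rho>) V" "\<epsilon> > 0"
  shows "\<exists>K. finite K \<and> K \<subseteq> V \<and> eps_net M \<rho> \<epsilon> K V"
proof -
  have "Metric_space.mtotally_bounded M \<rho> V"
    using Metric_space.compactin_imp_mtotally_bounded[OF assms(1,2)] .
  hence "\<forall>e>0. \<exists>K. finite K \<and> K \<subseteq> V \<and> V \<subseteq> (\<Union>x\<in>K. Metric_space.mball M \<rho> x e)"
    unfolding Metric_space.mtotally_bounded_def[OF assms(1)] .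
  hence "\<exists>K. finite K \<and> K \<subseteq> V \<and> V \<subseteq> (\<Union>x\<in>K. Metric_space.mball M \<rho> x \<epsilon>)"
    using assms(3) by simp
  then obtain K where K: "finite K" "K \<subseteq> V" "V \<subseteq> (\<Union>x\<in>K. Metric_space.mball M \<rho> x \<epsilon>)"
    by (elim exE conjE)
  have "V \<subseteq> (\<Union>x\<in>K. Metric_space.mcball M \<rho> x \<epsilon>)"
    using K(3) Metric_space.mball_subset_mcball[OF assms(1)] by blast
  thus ?thesis using K unfolding eps_net_def by blast
qed

lemma ultra_trans:
  assumes "ultrametric M \<rho>" "a \<in> M" "b \<in> M" "c \<in> M" "\<rho> a c \<le> e" "\<rho> c b \<le> e"
  shows "\<rho> a b \<le> e"
  using assms unfolding ultrametric_def by (metis max.bounded_iff order_trans)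

lemma sep_net:
  assumes U: "ultrametric M \<rho>" and "V \<subseteq> M" and ex: "\<exists>K. finite K \<and> K \<subseteq> V \<and> eps_net M \<rho> \<epsilon> K V"
  shows "\<exists>C. finite C \<and> C \<subseteq> V \<and> eps_net M \<rho> \<epsilon> C V \<and> eps_distinguishable \<rho> \<epsilon> C"
proof -
  have MS: "Metric_space M \<rho>" using U unfolding ultrametric_def by blast
  let ?P = "\<lambda>n. \<exists>C. finite C \<and> C \<subseteq> V \<and> card C = n \<and> eps_net M \<rho> \<epsilon> C V"
  have "\<exists>n. ?P n" using ex by blast
  then obtain C where C: "finite C" "C \<subseteq> V" "card C = (LEAST n. ?P n)" "eps_net M \<rho> \<epsilon> C V"
    using LeastI_ex[of ?P] by blast
  have "eps_distinguishable \<rho> \<epsilon> C"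
    unfolding eps_distinguishable_def
  proof (intro ballI impI, rule ccontr)
    fix a b assume ab: "a \<in> C" "b \<in> C" "a \<noteq> b" "\<not> \<epsilon> < \<rho> a b"
    have "eps_net M \<rho> \<epsilon> (C - {b}) V"
      unfolding eps_net_def
    proof
      fix v assume v: "v \<in> V"
      then obtain c where c: "c \<in> C" "v \<in> Metric_space.mcball M \<rho> c \<epsilon>"
        using C(4) unfolding eps_net_def by blast
      show "v \<in> (\<Union>c\<in>C - {b}. Metric_space.mcball M \<rho> c \<epsilon>)"
      proof (cases "c = b")
        case False thus ?thesis using c by blast
      next
        case True
        have inM: "a \<in> M" "b \<in> M" "v \<in> M" using ab C(2) assms(2) v by auto
        have "\<rho> b v \<le> \<epsilon>" using c True Metric_space.in_mcball[OF MS] by blast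
        moreover have "\<rho> a b \<le> \<epsilon>" using ab by simp
        ultimately have "\<rho> a v \<le> \<epsilon>" using ultra_trans[OF U inM(1) inM(3) inM(2)] by blast
        hence "v \<in> Metric_space.mcball M \<rho> a \<epsilon>" using inM Metric_space.in_mcball[OF MS] by blast
        thus ?thesis using ab by blast
      qed
    qed
    hence "?P (card (C - {b}))" using C by blast
    hence "(LEAST n. ?P n) \<le> card (C - {b})" by (rule Least_le)
    moreover have "card (C - {b}) < card C" by (rule card_Diff1_less[OF C(1) ab(2)])
    ultimately show False using C(3) by simp
  qed
  thus ?thesis using C by blast
qed

lemma numbers:
  assumes U: "ultrametric M \<rho>" and VM: "V \<subseteq> M" and C: "finite C" "C \<subseteq> V" "eps_net M \<rho> \<epsilon> C V"
    "eps_distinguishable \<rho> \<epsilon> C"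
  shows "packing_number \<rho> \<epsilon> V = card C \<and> covering_number M \<rho> \<epsilon> V = card C"
proof -
  have MS: "Metric_space M \<rho>" using U unfolding ultrametric_def by blast
  have pk: "card A \<le> card C" if A: "A \<subseteq> V" "finite A" "eps_distinguishable \<rho> \<epsilon> A" for A
  proof -
    define f where "f a = (SOME c. c \<in> C \<and> a \<in> Metric_space.mcball M \<rho> c \<epsilon>)" for a
    have f: "f a \<in> C \<and> a \<in> Metric_space.mcball M \<rho> (f a) \<epsilon>" if "a \<in> A" for a
    proof -
      have "\<exists>c. c \<in> C \<and> a \<in> Metric_space.mcball M \<rho> c \<epsilon>"
        using C(3) that A(1) unfolding eps_net_def by blast
      thus ?thesis unfolding f_def by (rule someI_ex)
    qed
    have "inj_on f A"
    proof (rule inj_onI, rule ccontr)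
      fix a1 a2 assume h: "a1 \<in> A" "a2 \<in> A" "f a1 = f a2" "a1 \<noteq> a2"
      have "\<rho> (f a1) a1 \<le> \<epsilon>" "\<rho> (f a1) a2 \<le> \<epsilon>" "f a1 \<in> M" "a1 \<in> M" "a2 \<in> M"
        using f[OF h(1)] f[OF h(2)] h(3) Metric_space.in_mcball[OF MS] by auto
      hence "\<rho> a1 a2 \<le> \<epsilon>"
        using ultra_trans[OF U, of a1 a2 "f a1" \<epsilon>] Metric_space.commute[OF MS] by metis
      thus False using A(3) h unfolding eps_distinguishable_def by force
    qed
    moreover have "f ` A \<subseteq> C" using f by blast
    ultimately show ?thesis using C(1) card_inj_on_le by blast
  qed
  have cv: "card C \<le> card D" if D: "D \<subseteq> V" "finite D" "eps_net M \<rho> \<epsilon> D V" for D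
  proof -
    define f where "f a = (SOME c. c \<in> D \<and> a \<in> Metric_space.mcball M \<rho> c \<epsilon>)" for a
    have f: "f a \<in> D \<and> a \<in> Metric_space.mcball M \<rho> (f a) \<epsilon>" if "a \<in> C" for a
    proof -
      have "\<exists>c. c \<in> D \<and> a \<in> Metric_space.mcball M \<rho> c \<epsilon>"
        using D(3) that C(2) unfolding eps_net_def by blast
      thus ?thesis unfolding f_def by (rule someI_ex)
    qed
    have "inj_on f C"
    proof (rule inj_onI, rule ccontr)
      fix a1 a2 assume h: "a1 \<in> C" "a2 \<in> C" "f a1 = f a2" "a1 \<noteq> a2"
      have "\<rho> (f a1) a1 \<le> \<epsilon>" "\<rho> (f a1) a2 \<le> \<epsilon>" "f a1 \<in> M" "a1 \<in> M" "a2 \<in> M"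
        using f[OF h(1)] f[OF h(2)] h(3) Metric_space.in_mcball[OF MS] by auto
      hence "\<rho> a1 a2 \<le> \<epsilon>"
        using ultra_trans[OF U, of a1 a2 "f a1" \<epsilon>] Metric_space.commute[OF MS] by metis
      thus False using C(4) h unfolding eps_distinguishable_def by force
    qed
    moreover have "f ` C \<subseteq> D" using f by blast
    ultimately show ?thesis using D(2) card_inj_on_le by blast
  qed
  have "packing_number \<rho> \<epsilon> V = card C"
    unfolding packing_number_def
    by (rule Greatest_equality) (use C pk in auto)
  moreover have "covering_number M \<rho> \<epsilon> V = card C"
    unfolding covering_number_def
    by (rule Least_equality) (use C cv in auto)
  ultimately show ?thesis by simp
qed

theorem lemma4p2:
  fixes X :: "'a set" and Y :: "'b set"
    and dX :: "'a \<Rightarrow> 'a \<Rightarrow> real" and dY :: "'b \<Rightarrow> 'b \<Rightarrow> real"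
    and d :: "'a \<times> 'b \<Rightarrow> 'a \<times> 'b \<Rightarrow> real"
    and W :: "'a set" and Z :: "'b set" and \<epsilon> :: real
  assumes "ultrametric X dX" and "ultrametric Y dY" and "ultrametric (X \<times> Y) d"
    and partial_x: "\<And>x1 x2 y. x1 \<in> X \<Longrightarrow> x2 \<in> X \<Longrightarrow> y \<in> Y \<Longrightarrow> d (x1, y) (x2, y) = dX x1 x2"
    and partial_y: "\<And>x y1 y2. x \<in> X \<Longrightarrow> y1 \<in> Y \<Longrightarrow> y2 \<in> Y \<Longrightarrow> d (x, y1) (x, y2) = dY y1 y2"
    and dinf_le: "\<And>x1 y1 x2 y2. x1 \<in> X \<Longrightarrow> y1 \<in> Y \<Longrightarrow> x2 \<in> X \<Longrightarrow> y2 \<in> Y \<Longrightarrow>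
                    max (dX x1 x2) (dY y1 y2) \<le> d (x1, y1) (x2, y2)"
    and "W \<subseteq> X" and "compactin (Metric_space.mtopology X dX) W"
    and "Z \<subseteq> Y" and "compactin (Metric_space.mtopology Y dY) Z"
    and "\<epsilon> > 0"
  shows "packing_number d \<epsilon> (W \<times> Z) = packing_number dX \<epsilon> W * packing_number dY \<epsilon> Z \<and>
         covering_number (X \<times> Y) d \<epsilon> (W \<times> Z) =
           covering_number X dX \<epsilon> W * covering_number Y dY \<epsilon> Z \<and>
         packing_number d \<epsilon> (W \<times> Z) = covering_number (X \<times> Y) d \<epsilon> (W \<times> Z)"
proof -
  have MX: "Metric_space X dX" using assms(1) unfolding ultrametric_def by blast
  have MY: "Metric_space Y dY" using assms(2) unfolding ultrametric_def by blast
  have MP: "Metric_space (X \<times> Y) d" using assms(3) unfolding ultrametric_def by blast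
  obtain CW where CW: "finite CW" "CW \<subseteq> W" "eps_net X dX \<epsilon> CW W" "eps_distinguishable dX \<epsilon> CW"
    using sep_net[OF assms(1) assms(7) ex_fin_net[OF MX assms(8) assms(11)]] by blast
  obtain CZ where CZ: "finite CZ" "CZ \<subseteq> Z" "eps_net Y dY \<epsilon> CZ Z" "eps_distinguishable dY \<epsilon> CZ"
    using sep_net[OF assms(2) assms(9) ex_fin_net[OF MY assms(10) assms(11)]] by blast
  have nW: "packing_number dX \<epsilon> W = card CW \<and> covering_number X dX \<epsilon> W = card CW"
    by (rule numbers[OF assms(1) assms(7) CW])
  have nZ: "packing_number dY \<epsilon> Z = card CZ \<and> covering_number Y dY \<epsilon> Z = card CZ"
    by (rule numbers[OF assms(2) assms(9) CZ])
  have net: "eps_net (X \<times> Y) d \<epsilon> (CW \<times> CZ) (W \<times> Z)"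
    unfolding eps_net_def
  proof
    fix p assume "p \<in> W \<times> Z"
    then obtain w z where p: "p = (w, z)" "w \<in> W" "z \<in> Z" by blast
    obtain cw where cw: "cw \<in> CW" "w \<in> Metric_space.mcball X dX cw \<epsilon>"
      using CW(3) p unfolding eps_net_def by blast
    obtain cz where cz: "cz \<in> CZ" "z \<in> Metric_space.mcball Y dY cz \<epsilon>"
      using CZ(3) p unfolding eps_net_def by blast
    have h: "cw \<in> X" "w \<in> X" "dX cw w \<le> \<epsilon>" "cz \<in> Y" "z \<in> Y" "dY cz z \<le> \<epsilon>"
      using cw cz Metric_space.in_mcball[OF MX] Metric_space.in_mcball[OF MY] by auto
    have "d (cw, cz) (w, cz) \<le> \<epsilon>" using partial_x h by simp
    moreover have "d (w, cz) (w, z) \<le> \<epsilon>" using partial_y h by simp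
    ultimately have "d (cw, cz) (w, z) \<le> \<epsilon>"
      using ultra_trans[OF assms(3), of "(cw,cz)" "(w,z)" "(w,cz)" \<epsilon>] h by auto
    hence "p \<in> Metric_space.mcball (X \<times> Y) d (cw, cz) \<epsilon>"
      using h p Metric_space.in_mcball[OF MP] by auto
    thus "p \<in> (\<Union>c\<in>CW \<times> CZ. Metric_space.mcball (X \<times> Y) d c \<epsilon>)" using cw cz by blast
  qed
  have dis: "eps_distinguishable d \<epsilon> (CW \<times> CZ)"
    unfolding eps_distinguishable_def
  proof (intro ballI impI)
    fix p q assume pq: "p \<in> CW \<times> CZ" "q \<in> CW \<times> CZ" "p \<noteq> q"
    obtain a b a' b' where ab: "p = (a,b)" "q = (a',b')" "a \<in> CW" "b \<in> CZ" "a' \<in> CW" "b' \<in> CZ"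
      using pq by blast
    have inn: "a \<in> X" "b \<in> Y" "a' \<in> X" "b' \<in> Y" using ab CW(2) CZ(2) assms(7,9) by auto
    have "\<epsilon> < dX a a' \<or> \<epsilon> < dY b b'"
      using CW(4) CZ(4) ab pq(3) unfolding eps_distinguishable_def by blast
    moreover have "max (dX a a') (dY b b') \<le> d (a,b) (a',b')" using dinf_le inn by blast
    ultimately show "\<epsilon> < d p q" using ab by auto
  qed
  have "W \<times> Z \<subseteq> X \<times> Y" using assms(7,9) by blast
  have nP: "packing_number d \<epsilon> (W \<times> Z) = card (CW \<times> CZ) \<and>
     covering_number (X \<times> Y) d \<epsilon> (W \<times> Z) = card (CW \<times> CZ)"
    by (rule numbers[OF assms(3) \<open>W \<times> Z \<subseteq> X \<times> Y\<close>]) (use CW CZ net dis in auto)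
  show ?thesis using nP nW nZ by (simp add: card_cartesian_product)
qed

end
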